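(* Let $G=G_1\times G_2$ be a direct product of finite groups, let $A$ be a finite group on which $G_1$ acts from the right by automorphisms, and let $I=\mathrm{Ind}_{G_1}^G(A)$, where $G_1$ is identified with $G_1\times\{1\}\leq G$. Assume $|G_2|\geq|A|$. Then there exists $\zeta\in I$ such that for every $g_1\in G_1$, the normal subgroup $N$ of $A\wr_{G_1}G$ generated by $\tau=(\zeta,(g_1,1))$ satisfies $\pi(N\cap I)=A$.
   Context: For finite groups $G_1\leq G$ and a finite group $A$ with a right action of $G_1$, $\mathrm{Ind}_{G_1}^G(A)=\{f:G\to A \mid f(\sigma\tau)=f(\sigma)^\tau\ \forall\sigma\in G,\ \forall\tau\in G_1\}$, a group under pointwise multiplication. $G$ acts on it from the right by $f^\sigma(\tau)=f(\sigma\tau)$. The twisted wreath product is the semidirect product $A\wr_{G_1}G=\mathrm{Ind}_{G_1}^G(A)\rtimes G$. The map $\pi:\mathrm{Ind}_{G_1}^G(A)\to A$ is $\pi(f)=f(1)$. *)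

theory Defs
  imports "HOL-Algebra.Group" "HOL-Algebra.Generated_Groups"
begin

text \<open>A right action of the group G1 on the group A by automorphisms:
  act t a stands for a raised to t (right exponential notation).\<close>
definition right_aut_action ::
  "('g, 'c) monoid_scheme \<Rightarrow> ('a, 'd) monoid_scheme \<Rightarrow> ('g \<Rightarrow> 'a \<Rightarrow> 'a) \<Rightarrow> bool" where
  "right_aut_action G1 A act \<longleftrightarrow>
     (\<forall>t\<in>carrier G1. act t \<in> iso A A) \<and>
     (\<forall>a\<in>carrier A. act \<one>\<^bsub>G1\<^esub> a = a) \<and>
     (\<forall>s\<in>carrier G1. \<forall>t\<in>carrier G1. \<forall>a\<in>carrier A.
        act (s \<otimes>\<^bsub>G1\<^esub> t) a = act t (act s a))"

definition Ind ::
  "('g, 'c) monoid_scheme \<Rightarrow> ('h, 'e) monoid_scheme \<Rightarrow> ('a, 'd) monoid_scheme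
    \<Rightarrow> ('g \<Rightarrow> 'a \<Rightarrow> 'a) \<Rightarrow> ('g \<times> 'h \<Rightarrow> 'a) set" where
  "Ind G1 G2 A act =
     {f. f \<in> carrier (G1 \<times>\<times> G2) \<rightarrow>\<^sub>E carrier A \<and>
         (\<forall>s\<in>carrier (G1 \<times>\<times> G2). \<forall>t\<in>carrier G1.
            f (s \<otimes>\<^bsub>G1 \<times>\<times> G2\<^esub> (t, \<one>\<^bsub>G2\<^esub>)) = act t (f s))}"

definition ind_act ::
  "('g, 'c) monoid_scheme \<Rightarrow> ('h, 'e) monoid_scheme
    \<Rightarrow> ('g \<times> 'h \<Rightarrow> 'a) \<Rightarrow> 'g \<times> 'h \<Rightarrow> ('g \<times> 'h \<Rightarrow> 'a)" where
  "ind_act G1 G2 f s = (\<lambda>x\<in>carrier (G1 \<times>\<times> G2). f (s \<otimes>\<^bsub>G1 \<times>\<times> G2\<^esub> x))"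

text \<open>Twisted wreath product Ind \<rtimes> G, with s^-1 f s = f^s, i.e.
  (f,s)(f',s') = (f * f'^(s^-1), s s').\<close>
definition twisted_wreath ::
  "('g, 'c) monoid_scheme \<Rightarrow> ('h, 'e) monoid_scheme \<Rightarrow> ('a, 'd) monoid_scheme
    \<Rightarrow> ('g \<Rightarrow> 'a \<Rightarrow> 'a) \<Rightarrow> (('g \<times> 'h \<Rightarrow> 'a) \<times> ('g \<times> 'h)) monoid" where
  "twisted_wreath G1 G2 A act =
     \<lparr> carrier = Ind G1 G2 A act \<times> carrier (G1 \<times>\<times> G2),
       mult = (\<lambda>(f, s) (f', s').
          ((\<lambda>x\<in>carrier (G1 \<times>\<times> G2).
              f x \<otimes>\<^bsub>A\<^esub> ind_act G1 G2 f' (inv\<^bsub>G1 \<times>\<times> G2\<^esub> s) x),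
           s \<otimes>\<^bsub>G1 \<times>\<times> G2\<^esub> s')),
       one = ((\<lambda>x\<in>carrier (G1 \<times>\<times> G2). \<one>\<^bsub>A\<^esub>), \<one>\<^bsub>G1 \<times>\<times> G2\<^esub>) \<rparr>"

definition normal_closure :: "('w, 'c) monoid_scheme \<Rightarrow> 'w set \<Rightarrow> 'w set" where
  "normal_closure W S =
     generate W (\<Union>g\<in>carrier W. (\<lambda>s. g \<otimes>\<^bsub>W\<^esub> s \<otimes>\<^bsub>W\<^esub> inv\<^bsub>W\<^esub> g) ` S)"

definition ind_pi :: "('g, 'c) monoid_scheme \<Rightarrow> ('h, 'e) monoid_scheme
    \<Rightarrow> ('g \<times> 'h \<Rightarrow> 'a) \<Rightarrow> 'a" where
  "ind_pi G1 G2 f = f \<one>\<^bsub>G1 \<times>\<times> G2\<^esub>"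

end

theory Submission
  imports Defs
begin

lemma mult_W_gen: "(f, s) \<otimes>\<^bsub>twisted_wreath G1 G2 A act\<^esub> (f', s') =
   ((\<lambda>x\<in>carrier (G1 \<times>\<times> G2). f x \<otimes>\<^bsub>A\<^esub> f' (inv\<^bsub>G1 \<times>\<times> G2\<^esub> s \<otimes>\<^bsub>G1 \<times>\<times> G2\<^esub> x)), s \<otimes>\<^bsub>G1 \<times>\<times> G2\<^esub> s')"
proof -
  have "(f, s) \<otimes>\<^bsub>twisted_wreath G1 G2 A act\<^esub> (f', s') =
   ((\<lambda>x\<in>carrier (G1 \<times>\<times> G2). f x \<otimes>\<^bsub>A\<^esub> ind_act G1 G2 f' (inv\<^bsub>G1 \<times>\<times> G2\<^esub> s) x), s \<otimes>\<^bsub>G1 \<times>\<times> G2\<^esub> s')"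
    by (simp add: twisted_wreath_def)
  also have "(\<lambda>x\<in>carrier (G1 \<times>\<times> G2). f x \<otimes>\<^bsub>A\<^esub> ind_act G1 G2 f' (inv\<^bsub>G1 \<times>\<times> G2\<^esub> s) x)
     = (\<lambda>x\<in>carrier (G1 \<times>\<times> G2). f x \<otimes>\<^bsub>A\<^esub> f' (inv\<^bsub>G1 \<times>\<times> G2\<^esub> s \<otimes>\<^bsub>G1 \<times>\<times> G2\<^esub> x))"
    by (rule restrict_ext) (simp add: ind_act_def)
  finally show ?thesis .
qed

locale tw = G1: group G1 + G2: group G2 + A: group A
  for G1 :: "('g, 'c) monoid_scheme" and G2 :: "('h, 'e) monoid_scheme"
    and A :: "('a, 'd) monoid_scheme" and act :: "'g \<Rightarrow> 'a \<Rightarrow> 'a" +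
  assumes ra: "right_aut_action G1 A act"
begin

abbreviation "GG \<equiv> G1 \<times>\<times> G2"
abbreviation "W \<equiv> twisted_wreath G1 G2 A act"

lemma GG: "group GG" by (simp add: DirProd_group G1.group_axioms G2.group_axioms)

sublocale GG: group GG by (rule GG)

lemma GG_mc [simp]: "x \<in> carrier G1 \<times> carrier G2 \<Longrightarrow> y \<in> carrier G1 \<times> carrier G2 \<Longrightarrow>
   x \<otimes>\<^bsub>GG\<^esub> y \<in> carrier G1 \<times> carrier G2"
  using GG.m_closed by simp

lemma GG_ic [simp]: "x \<in> carrier G1 \<times> carrier G2 \<Longrightarrow> inv\<^bsub>GG\<^esub> x \<in> carrier G1 \<times> carrier G2"
  using GG.inv_closed by simp

lemma act_gh: "t \<in> carrier G1 \<Longrightarrow> group_hom A A (act t)"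
  using ra unfolding right_aut_action_def iso_def group_hom_def group_hom_axioms_def
  by (auto simp: A.group_axioms)

lemma act_closed: "t \<in> carrier G1 \<Longrightarrow> a \<in> carrier A \<Longrightarrow> act t a \<in> carrier A"
  by (rule group_hom.hom_closed[OF act_gh])

lemma act_mult: "t \<in> carrier G1 \<Longrightarrow> a \<in> carrier A \<Longrightarrow> b \<in> carrier A \<Longrightarrow>
   act t (a \<otimes>\<^bsub>A\<^esub> b) = act t a \<otimes>\<^bsub>A\<^esub> act t b"
  by (rule group_hom.hom_mult[OF act_gh])

lemma act_one: "t \<in> carrier G1 \<Longrightarrow> act t \<one>\<^bsub>A\<^esub> = \<one>\<^bsub>A\<^esub>"
  by (rule group_hom.hom_one[OF act_gh])

lemma act_inv: "t \<in> carrier G1 \<Longrightarrow> a \<in> carrier A \<Longrightarrow> act t (inv\<^bsub>A\<^esub> a) = inv\<^bsub>A\<^esub> (act t a)"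
  by (rule group_hom.hom_inv[OF act_gh])

lemma act_1: "a \<in> carrier A \<Longrightarrow> act \<one>\<^bsub>G1\<^esub> a = a"
  using ra unfolding right_aut_action_def by blast

lemma act_comp: "s \<in> carrier G1 \<Longrightarrow> t \<in> carrier G1 \<Longrightarrow> a \<in> carrier A \<Longrightarrow>
   act (s \<otimes>\<^bsub>G1\<^esub> t) a = act t (act s a)"
  using ra unfolding right_aut_action_def by blast

lemma IndI:
  assumes "f \<in> carrier GG \<rightarrow>\<^sub>E carrier A"
    and "\<And>s t. s \<in> carrier GG \<Longrightarrow> t \<in> carrier G1 \<Longrightarrow>
          f (s \<otimes>\<^bsub>GG\<^esub> (t, \<one>\<^bsub>G2\<^esub>)) = act t (f s)"
  shows "f \<in> Ind G1 G2 A act"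
  using assms unfolding Ind_def by blast

lemma IndD1: "f \<in> Ind G1 G2 A act \<Longrightarrow> f \<in> carrier GG \<rightarrow>\<^sub>E carrier A"
  unfolding Ind_def by blast

lemma IndD2: "f \<in> Ind G1 G2 A act \<Longrightarrow> s \<in> carrier GG \<Longrightarrow> t \<in> carrier G1 \<Longrightarrow>
    f (s \<otimes>\<^bsub>GG\<^esub> (t, \<one>\<^bsub>G2\<^esub>)) = act t (f s)"
  unfolding Ind_def by blast

lemma Ind_closed: "f \<in> Ind G1 G2 A act \<Longrightarrow> x \<in> carrier GG \<Longrightarrow> f x \<in> carrier A"
  using IndD1 by blast

lemma GG_c1: "s \<in> carrier GG \<Longrightarrow> x \<in> carrier GG \<Longrightarrow> s \<otimes>\<^bsub>GG\<^esub> (inv\<^bsub>GG\<^esub> s \<otimes>\<^bsub>GG\<^esub> x) = x"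
  by (simp only: GG.m_assoc[OF _ GG.inv_closed, symmetric] GG.r_inv GG.l_one)

lemma GG_c2: "s \<in> carrier GG \<Longrightarrow> x \<in> carrier GG \<Longrightarrow> inv\<^bsub>GG\<^esub> s \<otimes>\<^bsub>GG\<^esub> (s \<otimes>\<^bsub>GG\<^esub> x) = x"
  by (simp only: GG.m_assoc[OF GG.inv_closed, symmetric] GG.l_inv GG.l_one)

lemma carrier_W: "carrier W = Ind G1 G2 A act \<times> carrier GG"
  by (simp add: twisted_wreath_def)

lemma one_W: "\<one>\<^bsub>W\<^esub> = ((\<lambda>x\<in>carrier GG. \<one>\<^bsub>A\<^esub>), \<one>\<^bsub>GG\<^esub>)"
  by (simp add: twisted_wreath_def)

lemma mult_W: "(f, s) \<otimes>\<^bsub>W\<^esub> (f', s') =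
   ((\<lambda>x\<in>carrier GG. f x \<otimes>\<^bsub>A\<^esub> f' (inv\<^bsub>GG\<^esub> s \<otimes>\<^bsub>GG\<^esub> x)), s \<otimes>\<^bsub>GG\<^esub> s')"
  by (rule mult_W_gen)

lemma inv_W:
  assumes f: "f \<in> Ind G1 G2 A act" and s: "s \<in> carrier GG"
  shows "inv\<^bsub>W\<^esub> (f, s) = ((\<lambda>w\<in>carrier GG. inv\<^bsub>A\<^esub> (f (s \<otimes>\<^bsub>GG\<^esub> w))), inv\<^bsub>GG\<^esub> s)"
  unfolding m_inv_def[of "twisted_wreath G1 G2 A act"]
proof (rule the_equality)
  let ?y = "((\<lambda>w\<in>carrier GG. inv\<^bsub>A\<^esub> (f (s \<otimes>\<^bsub>GG\<^esub> w))), inv\<^bsub>GG\<^esub> s)"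
  have Y: "fst ?y \<in> Ind G1 G2 A act"
  proof (rule IndI)
    show "fst ?y \<in> carrier GG \<rightarrow>\<^sub>E carrier A"
      using f s Ind_closed GG.m_closed by auto
  next
    fix w t assume w: "w \<in> carrier GG" and t: "t \<in> carrier G1"
    have t1: "(t, \<one>\<^bsub>G2\<^esub>) \<in> carrier GG" using t by simp
    have "fst ?y (w \<otimes>\<^bsub>GG\<^esub> (t, \<one>\<^bsub>G2\<^esub>)) = inv\<^bsub>A\<^esub> (f ((s \<otimes>\<^bsub>GG\<^esub> w) \<otimes>\<^bsub>GG\<^esub> (t, \<one>\<^bsub>G2\<^esub>)))"
      using w t1 s GG.m_closed GG.m_assoc by simp
    also have "\<dots> = inv\<^bsub>A\<^esub> (act t (f (s \<otimes>\<^bsub>GG\<^esub> w)))"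
      using IndD2[OF f _ t] s w GG.m_closed by simp
    also have "\<dots> = act t (fst ?y w)"
      using act_inv[OF t] Ind_closed[OF f] s w GG.m_closed by simp
    finally show "fst ?y (w \<otimes>\<^bsub>GG\<^esub> (t, \<one>\<^bsub>G2\<^esub>)) = act t (fst ?y w)" .
  qed
  have isG: "inv\<^bsub>GG\<^esub> s \<in> carrier GG" using s GG.inv_closed by blast
  show "?y \<in> carrier W \<and> (f, s) \<otimes>\<^bsub>W\<^esub> ?y = \<one>\<^bsub>W\<^esub> \<and> ?y \<otimes>\<^bsub>W\<^esub> (f, s) = \<one>\<^bsub>W\<^esub>"
  proof (intro conjI)
    show "?y \<in> carrier W" using Y isG by (simp add: carrier_W)
    have c1: "\<And>x. x \<in> carrier GG \<Longrightarrow> s \<otimes>\<^bsub>GG\<^esub> (inv\<^bsub>GG\<^esub> s \<otimes>\<^bsub>GG\<^esub> x) = x"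
      using s by (rule GG_c1)
    have c2: "\<And>x. x \<in> carrier GG \<Longrightarrow> inv\<^bsub>GG\<^esub> s \<otimes>\<^bsub>GG\<^esub> x \<in> carrier GG"
      using s by simp
    have c3: "\<And>x. x \<in> carrier GG \<Longrightarrow> s \<otimes>\<^bsub>GG\<^esub> x \<in> carrier GG"
      using s by simp
    show "(f, s) \<otimes>\<^bsub>W\<^esub> ?y = \<one>\<^bsub>W\<^esub>"
      unfolding mult_W one_W
      apply (simp only: prod.inject GG.r_inv[OF s])
      apply (intro conjI restrict_ext refl)
      using c1 c2 Ind_closed[OF f] by simp
    show "?y \<otimes>\<^bsub>W\<^esub> (f, s) = \<one>\<^bsub>W\<^esub>"
      unfolding mult_W one_W
      apply (simp only: prod.inject GG.l_inv[OF s])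
      apply (intro conjI restrict_ext refl)
      using c3 Ind_closed[OF f] s by simp
  qed
  fix y assume "y \<in> carrier W \<and> (f, s) \<otimes>\<^bsub>W\<^esub> y = \<one>\<^bsub>W\<^esub> \<and> y \<otimes>\<^bsub>W\<^esub> (f, s) = \<one>\<^bsub>W\<^esub>"
  then obtain f' s' where y: "y = (f', s')" and f': "f' \<in> Ind G1 G2 A act" and s': "s' \<in> carrier GG"
    and eq: "(f, s) \<otimes>\<^bsub>W\<^esub> (f', s') = \<one>\<^bsub>W\<^esub>"
    by (cases y) (auto simp: carrier_W)
  from eq have e1: "(\<lambda>x\<in>carrier GG. f x \<otimes>\<^bsub>A\<^esub> f' (inv\<^bsub>GG\<^esub> s \<otimes>\<^bsub>GG\<^esub> x)) = (\<lambda>x\<in>carrier GG. \<one>\<^bsub>A\<^esub>)"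
    and e2: "s \<otimes>\<^bsub>GG\<^esub> s' = \<one>\<^bsub>GG\<^esub>"
    unfolding mult_W one_W by simp_all
  have "s' = inv\<^bsub>GG\<^esub> s"
    using GG.inv_equality[OF GG.inv_comm[OF e2 s s'] s s'] by simp
  moreover have "f' = fst ?y"
  proof (rule extensionalityI[where A="carrier GG"])
    show "f' \<in> extensional (carrier GG)" using IndD1[OF f'] by (simp add: PiE_def)
    show "fst ?y \<in> extensional (carrier GG)" by simp
    fix w assume w: "w \<in> carrier GG"
    have sw: "s \<otimes>\<^bsub>GG\<^esub> w \<in> carrier GG" using s w GG.m_closed by blast
    have "f (s \<otimes>\<^bsub>GG\<^esub> w) \<otimes>\<^bsub>A\<^esub> f' (inv\<^bsub>GG\<^esub> s \<otimes>\<^bsub>GG\<^esub> (s \<otimes>\<^bsub>GG\<^esub> w)) = \<one>\<^bsub>A\<^esub>"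
      using fun_cong[OF e1, of "s \<otimes>\<^bsub>GG\<^esub> w"] sw by simp
    moreover have "inv\<^bsub>GG\<^esub> s \<otimes>\<^bsub>GG\<^esub> (s \<otimes>\<^bsub>GG\<^esub> w) = w"
      using s w by (rule GG_c2)
    ultimately have "f (s \<otimes>\<^bsub>GG\<^esub> w) \<otimes>\<^bsub>A\<^esub> f' w = \<one>\<^bsub>A\<^esub>" by simp
    then have "inv\<^bsub>A\<^esub> (f (s \<otimes>\<^bsub>GG\<^esub> w)) = f' w"
      using A.inv_equality[OF A.inv_comm[OF _ Ind_closed[OF f sw] Ind_closed[OF f' w]] Ind_closed[OF f sw] Ind_closed[OF f' w]]
      by blast
    then show "f' w = fst ?y w" using w by simp
  qed
  ultimately show "y = ?y" using y by simp
qed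

end

context tw
begin

lemma main:
  assumes phiA: "\<And>h. h \<in> carrier G2 \<Longrightarrow> phi h \<in> carrier A"
    and phiS: "\<And>a. a \<in> carrier A \<Longrightarrow> \<exists>h\<in>carrier G2. phi h = a"
  shows "\<exists>\<zeta>\<in>Ind G1 G2 A act. \<forall>g1\<in>carrier G1.
     (let W = twisted_wreath G1 G2 A act;
          N = normal_closure W {(\<zeta>, (g1, \<one>\<^bsub>G2\<^esub>))}
      in ind_pi G1 G2 ` {f \<in> Ind G1 G2 A act. (f, \<one>\<^bsub>G1 \<times>\<times> G2\<^esub>) \<in> N}
         = carrier A)"
proof -
  define \<zeta> where "\<zeta> = (\<lambda>x\<in>carrier GG. act (fst x) (phi (snd x)))"
  have zc: "\<And>x. x \<in> carrier GG \<Longrightarrow> \<zeta> x \<in> carrier A"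
    unfolding \<zeta>_def using act_closed phiA by auto
  have zI: "\<zeta> \<in> Ind G1 G2 A act"
  proof (rule IndI)
    show "\<zeta> \<in> carrier GG \<rightarrow>\<^sub>E carrier A" using zc by (simp add: \<zeta>_def)
  next
    fix s t assume s: "s \<in> carrier GG" and t: "t \<in> carrier G1"
    then show "\<zeta> (s \<otimes>\<^bsub>GG\<^esub> (t, \<one>\<^bsub>G2\<^esub>)) = act t (\<zeta> s)"
      unfolding \<zeta>_def using act_comp phiA by (cases s) auto
  qed
  define e where "e = (\<lambda>x\<in>carrier GG. \<one>\<^bsub>A\<^esub>)"
  have eI: "e \<in> Ind G1 G2 A act"
    by (rule IndI) (auto simp: e_def act_one)
  show ?thesis
  proof (intro bexI[OF _ zI] ballI)
    fix g1 assume g1: "g1 \<in> carrier G1"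
    define g where "g = (g1, \<one>\<^bsub>G2\<^esub>)"
    have g: "g \<in> carrier GG" using g1 by (simp add: g_def)
    define S where "S = (\<Union>c\<in>carrier W. (\<lambda>s. c \<otimes>\<^bsub>W\<^esub> s \<otimes>\<^bsub>W\<^esub> inv\<^bsub>W\<^esub> c) ` {(\<zeta>, g)})"
    have conj: "((\<lambda>x\<in>carrier GG. \<zeta> ((\<one>\<^bsub>G1\<^esub>, inv\<^bsub>G2\<^esub> h) \<otimes>\<^bsub>GG\<^esub> x)), g) \<in> S"
      if h: "h \<in> carrier G2" for h
    proof -
      define s where "s = (\<one>\<^bsub>G1\<^esub>, h)"
      have s: "s \<in> carrier GG" using h by (simp add: s_def)
      have cW: "(e, s) \<in> carrier W" using eI s by (simp add: carrier_W)
      have ic: "inv\<^bsub>W\<^esub> (e, s) = (e, inv\<^bsub>GG\<^esub> s)"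
      proof -
        have "(\<lambda>w\<in>carrier GG. inv\<^bsub>A\<^esub> (e (s \<otimes>\<^bsub>GG\<^esub> w))) = e"
          unfolding e_def by (rule restrict_ext) (use s in simp)
        then show ?thesis using inv_W[OF eI s] by simp
      qed
      have invs: "inv\<^bsub>GG\<^esub> s = (\<one>\<^bsub>G1\<^esub>, inv\<^bsub>G2\<^esub> h)"
        using h by (simp add: s_def)
      have eqn: "(e, s) \<otimes>\<^bsub>W\<^esub> (\<zeta>, g) \<otimes>\<^bsub>W\<^esub> inv\<^bsub>W\<^esub> (e, s)
          = ((\<lambda>x\<in>carrier GG. \<zeta> ((\<one>\<^bsub>G1\<^esub>, inv\<^bsub>G2\<^esub> h) \<otimes>\<^bsub>GG\<^esub> x)), g)"
        unfolding ic mult_W invs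
      proof (simp only: prod.inject, intro conjI)
        show "(\<lambda>x\<in>carrier GG. (\<lambda>x\<in>carrier GG. e x \<otimes>\<^bsub>A\<^esub> \<zeta> ((\<one>\<^bsub>G1\<^esub>, inv\<^bsub>G2\<^esub> h) \<otimes>\<^bsub>GG\<^esub> x)) x \<otimes>\<^bsub>A\<^esub>
                 e (inv\<^bsub>GG\<^esub> (s \<otimes>\<^bsub>GG\<^esub> g) \<otimes>\<^bsub>GG\<^esub> x)) =
              (\<lambda>x\<in>carrier GG. \<zeta> ((\<one>\<^bsub>G1\<^esub>, inv\<^bsub>G2\<^esub> h) \<otimes>\<^bsub>GG\<^esub> x))"
        proof (rule restrict_ext)
          fix x assume x: "x \<in> carrier GG"
          have x1: "(\<one>\<^bsub>G1\<^esub>, inv\<^bsub>G2\<^esub> h) \<otimes>\<^bsub>GG\<^esub> x \<in> carrier GG" using x h by auto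
          have x2: "inv\<^bsub>GG\<^esub> (s \<otimes>\<^bsub>GG\<^esub> g) \<otimes>\<^bsub>GG\<^esub> x \<in> carrier GG" using x s g by simp
          show "(\<lambda>x\<in>carrier GG. e x \<otimes>\<^bsub>A\<^esub> \<zeta> ((\<one>\<^bsub>G1\<^esub>, inv\<^bsub>G2\<^esub> h) \<otimes>\<^bsub>GG\<^esub> x)) x \<otimes>\<^bsub>A\<^esub>
                 e (inv\<^bsub>GG\<^esub> (s \<otimes>\<^bsub>GG\<^esub> g) \<otimes>\<^bsub>GG\<^esub> x) = \<zeta> ((\<one>\<^bsub>G1\<^esub>, inv\<^bsub>G2\<^esub> h) \<otimes>\<^bsub>GG\<^esub> x)"
            using x x1 x2 zc[OF x1] by (simp add: e_def)
        qed
        show "s \<otimes>\<^bsub>GG\<^esub> g \<otimes>\<^bsub>GG\<^esub> (\<one>\<^bsub>G1\<^esub>, inv\<^bsub>G2\<^esub> h) = g"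
          using h g1 by (simp add: s_def g_def)
      qed
      show ?thesis unfolding S_def
        by (rule UN_I[OF cW], rule image_eqI[where x="(\<zeta>, g)" and f="\<lambda>y. (e, s) \<otimes>\<^bsub>W\<^esub> y \<otimes>\<^bsub>W\<^esub> inv\<^bsub>W\<^esub> (e, s)", OF eqn[symmetric]], rule singletonI)
    qed
    have tauS: "(\<zeta>, g) \<in> S"
    proof -
      have "(\<lambda>x\<in>carrier GG. \<zeta> ((\<one>\<^bsub>G1\<^esub>, inv\<^bsub>G2\<^esub> \<one>\<^bsub>G2\<^esub>) \<otimes>\<^bsub>GG\<^esub> x)) = \<zeta>"
        by (auto simp: \<zeta>_def fun_eq_iff)
      then show ?thesis using conj[of "\<one>\<^bsub>G2\<^esub>"] by simp
    qed
    have itau: "inv\<^bsub>W\<^esub> (\<zeta>, g) = ((\<lambda>w\<in>carrier GG. inv\<^bsub>A\<^esub> (\<zeta> (g \<otimes>\<^bsub>GG\<^esub> w))), inv\<^bsub>GG\<^esub> g)"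
      by (rule inv_W[OF zI g])
    show "let W = twisted_wreath G1 G2 A act;
          N = normal_closure W {(\<zeta>, (g1, \<one>\<^bsub>G2\<^esub>))}
      in ind_pi G1 G2 ` {f \<in> Ind G1 G2 A act. (f, \<one>\<^bsub>G1 \<times>\<times> G2\<^esub>) \<in> N}
         = carrier A"
      unfolding Let_def normal_closure_def g_def[symmetric] S_def[symmetric]
    proof
      show "ind_pi G1 G2 ` {f \<in> Ind G1 G2 A act. (f, \<one>\<^bsub>GG\<^esub>) \<in> generate W S} \<subseteq> carrier A"
        using Ind_closed by (auto simp: ind_pi_def)
    next
      show "carrier A \<subseteq> ind_pi G1 G2 ` {f \<in> Ind G1 G2 A act. (f, \<one>\<^bsub>GG\<^esub>) \<in> generate W S}"
      proof
        fix a assume a: "a \<in> carrier A"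
        have p1: "phi \<one>\<^bsub>G2\<^esub> \<in> carrier A" using phiA by simp
        obtain h0 where h0: "h0 \<in> carrier G2" and ph0: "phi h0 = a \<otimes>\<^bsub>A\<^esub> phi \<one>\<^bsub>G2\<^esub>"
          using phiS[of "a \<otimes>\<^bsub>A\<^esub> phi \<one>\<^bsub>G2\<^esub>"] a p1 by auto
        define h where "h = inv\<^bsub>G2\<^esub> h0"
        have h: "h \<in> carrier G2" using h0 by (simp add: h_def)
        have ih: "inv\<^bsub>G2\<^esub> h = h0" using h0 by (simp add: h_def)
        define F where "F = (\<lambda>x\<in>carrier GG. \<zeta> ((\<one>\<^bsub>G1\<^esub>, h0) \<otimes>\<^bsub>GG\<^esub> x) \<otimes>\<^bsub>A\<^esub> inv\<^bsub>A\<^esub> (\<zeta> x))"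
        have prod: "((\<lambda>x\<in>carrier GG. \<zeta> ((\<one>\<^bsub>G1\<^esub>, h0) \<otimes>\<^bsub>GG\<^esub> x)), g) \<otimes>\<^bsub>W\<^esub> inv\<^bsub>W\<^esub> (\<zeta>, g)
            = (F, \<one>\<^bsub>GG\<^esub>)"
          unfolding itau mult_W
        proof (simp only: prod.inject, intro conjI)
          show "g \<otimes>\<^bsub>GG\<^esub> inv\<^bsub>GG\<^esub> g = \<one>\<^bsub>GG\<^esub>" using g by simp
          show "(\<lambda>x\<in>carrier GG. (\<lambda>x\<in>carrier GG. \<zeta> ((\<one>\<^bsub>G1\<^esub>, h0) \<otimes>\<^bsub>GG\<^esub> x)) x \<otimes>\<^bsub>A\<^esub>
               (\<lambda>w\<in>carrier GG. inv\<^bsub>A\<^esub> \<zeta> (g \<otimes>\<^bsub>GG\<^esub> w)) (inv\<^bsub>GG\<^esub> g \<otimes>\<^bsub>GG\<^esub> x)) = F"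
            unfolding F_def
          proof (rule restrict_ext)
            fix x assume x: "x \<in> carrier GG"
            have x2: "inv\<^bsub>GG\<^esub> g \<otimes>\<^bsub>GG\<^esub> x \<in> carrier GG" using x g by simp
            have x3: "g \<otimes>\<^bsub>GG\<^esub> (inv\<^bsub>GG\<^esub> g \<otimes>\<^bsub>GG\<^esub> x) = x"
              using g x by (rule GG_c1)
            show "(\<lambda>x\<in>carrier GG. \<zeta> ((\<one>\<^bsub>G1\<^esub>, h0) \<otimes>\<^bsub>GG\<^esub> x)) x \<otimes>\<^bsub>A\<^esub>
               (\<lambda>w\<in>carrier GG. inv\<^bsub>A\<^esub> \<zeta> (g \<otimes>\<^bsub>GG\<^esub> w)) (inv\<^bsub>GG\<^esub> g \<otimes>\<^bsub>GG\<^esub> x) =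
               \<zeta> ((\<one>\<^bsub>G1\<^esub>, h0) \<otimes>\<^bsub>GG\<^esub> x) \<otimes>\<^bsub>A\<^esub> inv\<^bsub>A\<^esub> \<zeta> x"
              using x x2 x3 by (simp only: restrict_apply' )
          qed
        qed
        have "(F, \<one>\<^bsub>GG\<^esub>) \<in> generate W S"
        proof -
          have c: "((\<lambda>x\<in>carrier GG. \<zeta> ((\<one>\<^bsub>G1\<^esub>, h0) \<otimes>\<^bsub>GG\<^esub> x)), g) \<in> S"
            using conj[OF h] ih by simp
          show ?thesis unfolding prod[symmetric]
            by (rule generate.eng[OF generate.incl[OF c] generate.inv[OF tauS]])
        qed
        moreover have FI: "F \<in> Ind G1 G2 A act"
        proof (rule IndI)
          have "\<And>x. x \<in> carrier GG \<Longrightarrow> (\<one>\<^bsub>G1\<^esub>, h0) \<otimes>\<^bsub>GG\<^esub> x \<in> carrier GG" using h0 by auto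
          then show "F \<in> carrier GG \<rightarrow>\<^sub>E carrier A" using zc by (auto simp: F_def)
        next
          fix s t assume s: "s \<in> carrier GG" and t: "t \<in> carrier G1"
          have t1: "(t, \<one>\<^bsub>G2\<^esub>) \<in> carrier GG" using t by simp
          have o: "(\<one>\<^bsub>G1\<^esub>, h0) \<in> carrier GG" using h0 by simp
          have st: "s \<otimes>\<^bsub>GG\<^esub> (t, \<one>\<^bsub>G2\<^esub>) \<in> carrier GG" using s t1 by (rule GG.m_closed)
          have os: "(\<one>\<^bsub>G1\<^esub>, h0) \<otimes>\<^bsub>GG\<^esub> s \<in> carrier GG" using o s by (rule GG.m_closed)
          have as: "(\<one>\<^bsub>G1\<^esub>, h0) \<otimes>\<^bsub>GG\<^esub> (s \<otimes>\<^bsub>GG\<^esub> (t, \<one>\<^bsub>G2\<^esub>)) = ((\<one>\<^bsub>G1\<^esub>, h0) \<otimes>\<^bsub>GG\<^esub> s) \<otimes>\<^bsub>GG\<^esub> (t, \<one>\<^bsub>G2\<^esub>)"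
            using GG.m_assoc[OF o s t1] by simp
          have "F (s \<otimes>\<^bsub>GG\<^esub> (t, \<one>\<^bsub>G2\<^esub>)) = act t (\<zeta> ((\<one>\<^bsub>G1\<^esub>, h0) \<otimes>\<^bsub>GG\<^esub> s)) \<otimes>\<^bsub>A\<^esub> inv\<^bsub>A\<^esub> (act t (\<zeta> s))"
            unfolding F_def using st as IndD2[OF zI os t] IndD2[OF zI s t] by simp
          also have "\<dots> = act t (F s)"
            unfolding F_def using s os zc t by (simp add: act_mult act_inv)
          finally show "F (s \<otimes>\<^bsub>GG\<^esub> (t, \<one>\<^bsub>G2\<^esub>)) = act t (F s)" .
        qed
        moreover have "ind_pi G1 G2 F = a"
        proof -
          have "ind_pi G1 G2 F = \<zeta> (\<one>\<^bsub>G1\<^esub>, h0) \<otimes>\<^bsub>A\<^esub> inv\<^bsub>A\<^esub> (\<zeta> (\<one>\<^bsub>G1\<^esub>, \<one>\<^bsub>G2\<^esub>))"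
            unfolding ind_pi_def F_def using h0 by simp
          also have "\<dots> = (a \<otimes>\<^bsub>A\<^esub> phi \<one>\<^bsub>G2\<^esub>) \<otimes>\<^bsub>A\<^esub> inv\<^bsub>A\<^esub> (phi \<one>\<^bsub>G2\<^esub>)"
            unfolding \<zeta>_def using h0 ph0 a p1 by (simp add: act_1)
          also have "\<dots> = a" using a p1 by (simp add: A.m_assoc)
          finally show ?thesis .
        qed
        ultimately show "a \<in> ind_pi G1 G2 ` {f \<in> Ind G1 G2 A act. (f, \<one>\<^bsub>GG\<^esub>) \<in> generate W S}"
          by blast
      qed
    qed
  qed
qed

end

theorem lemma4p1:
  fixes G1 :: "('g, 'c) monoid_scheme" and G2 :: "('h, 'e) monoid_scheme"
    and A :: "('a, 'd) monoid_scheme" and act :: "'g \<Rightarrow> 'a \<Rightarrow> 'a"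
  assumes "group G1" and "group G2" and "group A"
    and "finite (carrier G1)" and "finite (carrier G2)" and "finite (carrier A)"
    and "right_aut_action G1 A act"
    and "card (carrier G2) \<ge> card (carrier A)"
  shows "\<exists>\<zeta>\<in>Ind G1 G2 A act. \<forall>g1\<in>carrier G1.
     (let W = twisted_wreath G1 G2 A act;
          N = normal_closure W {(\<zeta>, (g1, \<one>\<^bsub>G2\<^esub>))}
      in ind_pi G1 G2 ` {f \<in> Ind G1 G2 A act. (f, \<one>\<^bsub>G1 \<times>\<times> G2\<^esub>) \<in> N}
         = carrier A)"
proof -
  interpret tw G1 G2 A act
    using assms by (simp add: tw_def tw_axioms_def)
  obtain psi where psi: "psi ` carrier A \<subseteq> carrier G2" "inj_on psi (carrier A)"
    using card_le_inj[OF assms(6) assms(5) assms(8)] by blast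
  define phi where "phi = (\<lambda>h. if h \<in> psi ` carrier A then inv_into (carrier A) psi h else \<one>\<^bsub>A\<^esub>)"
  have "\<And>h. h \<in> carrier G2 \<Longrightarrow> phi h \<in> carrier A"
    unfolding phi_def using inv_into_into[of _ psi "carrier A"] A.one_closed by simp
  moreover have "\<And>a. a \<in> carrier A \<Longrightarrow> \<exists>h\<in>carrier G2. phi h = a"
  proof -
    fix a assume a: "a \<in> carrier A"
    have "psi a \<in> psi ` carrier A" using a by (rule imageI)
    then have "phi (psi a) = a" unfolding phi_def using inv_into_f_f[OF psi(2) a] by simp
    moreover have "psi a \<in> carrier G2" using psi(1) a by blast
    ultimately show "\<exists>h\<in>carrier G2. phi h = a" by blast
  qed
  ultimately show ?thesis by (rule main)
qed

end
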